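(* Let $m$ and $s$ be fixed positive integers and let $G$ be a graph on $n$ vertices. Suppose there is a partition of $V(G)$ into sets $V_1,\dots,V_s$ such that: (i) for each $i<s$ there is no path with $3$ vertices whose two endpoints both lie in $V_i$; (ii) there is no path with $m+1$ vertices whose endpoints lie in $V_i$ and $V_j$ for some $i\neq j$; (iii) $V_s$ is an independent set. Then $|E(G)|=O(n)$ (as $n\to\infty$, with the implied constant depending only on $m$ and $s$).
   Context: Paths are subgraphs; a path with $t$ vertices has $t-1$ edges. *)

theory Defs
  imports Complex_Main
begin

definition simple_graph :: "'a set \<Rightarrow> 'a set set \<Rightarrow> bool" where
  "simple_graph V E \<longleftrightarrow> finite V \<and> (\<forall>e\<in>E. e \<subseteq> V \<and> card e = 2)"

text \<open>A path in the graph given as its vertex sequence: distinct vertices,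
  consecutive ones adjacent. A path with t vertices is a list of length t;
  its endpoints are hd and last.\<close>
definition is_path :: "'a set set \<Rightarrow> 'a list \<Rightarrow> bool" where
  "is_path E xs \<longleftrightarrow> xs \<noteq> [] \<and> distinct xs \<and>
     (\<forall>i. i + 1 < length xs \<longrightarrow> {xs ! i, xs ! (i + 1)} \<in> E)"

definition is_partition :: "'a set \<Rightarrow> nat \<Rightarrow> (nat \<Rightarrow> 'a set) \<Rightarrow> bool" where
  "is_partition V s P \<longleftrightarrow> (\<Union>i\<in>{1..s}. P i) = V \<and>
     (\<forall>i\<in>{1..s}. \<forall>j\<in>{1..s}. i \<noteq> j \<longrightarrow> P i \<inter> P j = {})"

definition independent :: "'a set set \<Rightarrow> 'a set \<Rightarrow> bool" where
  "independent E A \<longleftrightarrow> (\<forall>u\<in>A. \<forall>v\<in>A. {u, v} \<notin> E)"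

end

theory Submission
  imports Defs
begin

lemma touch_bound:
  assumes sg: "simple_graph V E"
    and np: "\<not> (\<exists>xs. is_path E xs \<and> length xs = 3 \<and> hd xs \<in> A \<and> last xs \<in> A)"
  shows "card {e\<in>E. e \<inter> A \<noteq> {}} \<le> card V"
proof -
  define f where "f e = (SOME w. \<exists>x. e = {w,x} \<and> w \<noteq> x \<and> x \<in> A)" for e
  have fin: "finite V" using sg by (simp add: simple_graph_def)
  have key: "\<exists>x. e = {f e, x} \<and> f e \<noteq> x \<and> x \<in> A" if "e \<in> E" "e \<inter> A \<noteq> {}" for e
  proof -
    from that sg have "card e = 2" by (simp add: simple_graph_def)
    then obtain u v where uv: "e = {u,v}" "u \<noteq> v" by (auto simp: card_2_iff)
    with that have "\<exists>w x. e = {w,x} \<and> w \<noteq> x \<and> x \<in> A" by blast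
    then have "\<exists>w. \<exists>x. e = {w,x} \<and> w \<noteq> x \<and> x \<in> A" by blast
    then show ?thesis unfolding f_def by (rule someI_ex)
  qed
  have inj: "inj_on f {e\<in>E. e \<inter> A \<noteq> {}}"
  proof (rule inj_onI)
    fix e1 e2 assume e1: "e1 \<in> {e\<in>E. e \<inter> A \<noteq> {}}" and e2: "e2 \<in> {e\<in>E. e \<inter> A \<noteq> {}}"
      and eq: "f e1 = f e2"
    obtain x1 where x1: "e1 = {f e1, x1}" "f e1 \<noteq> x1" "x1 \<in> A" using key e1 by blast
    obtain x2 where x2: "e2 = {f e2, x2}" "f e2 \<noteq> x2" "x2 \<in> A" using key e2 by blast
    show "e1 = e2"
    proof (rule ccontr)
      assume ne: "e1 \<noteq> e2"
      then have "x1 \<noteq> x2" using x1 x2 eq by auto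
      let ?xs = "[x1, f e1, x2]"
      have "is_path E ?xs"
        unfolding is_path_def
      proof (intro conjI allI impI)
        show "?xs \<noteq> []" by simp
        show "distinct ?xs" using x1(2) x2(2) eq \<open>x1 \<noteq> x2\<close> by auto
      next
        fix i assume "i + 1 < length ?xs"
        then have "i = 0 \<or> i = 1" by auto
        moreover have "{x1, f e1} \<in> E" using e1 x1 by (simp add: insert_commute)
        moreover have "{f e1, x2} \<in> E" using e2 x2 eq by simp
        ultimately show "{?xs ! i, ?xs ! (i + 1)} \<in> E" by auto
      qed
      then show False using np x1 x2 by fastforce
    qed
  qed
  have sub: "f ` {e\<in>E. e \<inter> A \<noteq> {}} \<subseteq> V"
  proof
    fix w assume "w \<in> f ` {e\<in>E. e \<inter> A \<noteq> {}}"
    then obtain e where e: "e \<in> E" "e \<inter> A \<noteq> {}" "w = f e" by blast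
    then obtain x where "e = {f e, x}" using key by blast
    moreover have "e \<subseteq> V" using sg e by (simp add: simple_graph_def)
    ultimately show "w \<in> V" using e by auto
  qed
  show ?thesis using card_inj_on_le[OF inj sub fin] .
qed

theorem lemma3:
  fixes m s :: nat
  assumes "m \<ge> 1" and "s \<ge> 1"
  shows "\<exists>C::real. \<forall>(V::nat set) (E::nat set set) (P::nat \<Rightarrow> nat set).
     simple_graph V E \<and> is_partition V s P
     \<and> (\<forall>i\<in>{1..<s}. \<not> (\<exists>xs. is_path E xs \<and> length xs = 3 \<and> hd xs \<in> P i \<and> last xs \<in> P i))
     \<and> (\<forall>i\<in>{1..s}. \<forall>j\<in>{1..s}. i \<noteq> j \<longrightarrow>
          \<not> (\<exists>xs. is_path E xs \<and> length xs = m + 1 \<and> hd xs \<in> P i \<and> last xs \<in> P j))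
     \<and> independent E (P s)
     \<longrightarrow> real (card E) \<le> C * real (card V)"
proof (rule exI[of _ "real s"], intro allI impI, elim conjE)
  fix V :: "nat set" and E :: "nat set set" and P :: "nat \<Rightarrow> nat set"
  assume sg: "simple_graph V E" and part: "is_partition V s P"
    and np: "\<forall>i\<in>{1..<s}. \<not> (\<exists>xs. is_path E xs \<and> length xs = 3 \<and> hd xs \<in> P i \<and> last xs \<in> P i)"
    and ind: "independent E (P s)"
  have sub: "E \<subseteq> (\<Union>i\<in>{1..<s}. {e\<in>E. e \<inter> P i \<noteq> {}})"
  proof
    fix e assume e: "e \<in> E"
    with sg have "card e = 2" "e \<subseteq> V" by (auto simp: simple_graph_def)
    then obtain u v where uv: "e = {u,v}" "u \<noteq> v" by (auto simp: card_2_iff)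
    have "\<not> (u \<in> P s \<and> v \<in> P s)" using ind e uv by (auto simp: independent_def)
    moreover have "u \<in> V" "v \<in> V" using uv \<open>e \<subseteq> V\<close> by auto
    ultimately obtain w i where "w \<in> e" "i \<in> {1..s}" "w \<in> P i" "i \<noteq> s"
      using part uv unfolding is_partition_def by blast
    then show "e \<in> (\<Union>i\<in>{1..<s}. {e\<in>E. e \<inter> P i \<noteq> {}})" using e by auto
  qed
  have "card E \<le> card (\<Union>i\<in>{1..<s}. {e\<in>E. e \<inter> P i \<noteq> {}})"
  proof (rule card_mono[OF _ sub])
    have "finite (Pow V)" using sg by (simp add: simple_graph_def)
    moreover have "E \<subseteq> Pow V" using sg by (auto simp: simple_graph_def)
    ultimately have "finite E" by (rule finite_subset[rotated])
    then show "finite (\<Union>i\<in>{1..<s}. {e\<in>E. e \<inter> P i \<noteq> {}})" by auto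
  qed
  also have "\<dots> \<le> (\<Sum>i\<in>{1..<s}. card {e\<in>E. e \<inter> P i \<noteq> {}})" by (rule card_UN_le) simp
  also have "\<dots> \<le> (\<Sum>i\<in>{1..<s}. card V)"
    by (rule sum_mono) (use touch_bound[OF sg] np in blast)
  also have "\<dots> \<le> s * card V" by simp
  finally have "card E \<le> s * card V" .
  then show "real (card E) \<le> real s * real (card V)" by (metis of_nat_le_iff of_nat_mult)
qed

end
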